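(* Let $\mathcal Q$ be a collection of probability measures on $\{0,1\}^{\mathbb N}$, let $\varepsilon\ge 0$, and let $\mathcal Q_\varepsilon=\{q^1,q^2,\dots\}\subset[0,1]^{\mathbb N}$ be a countable (finite or countably infinite), enumerated set such that for every $q\in\mathrm{Mean}(\mathcal Q)$ there is an index $i$ with $\|q-q^i\|_\infty\le\varepsilon$. For a sample $S=(X^{(1)},\dots,X^{(n)})$, let $\hat q_j=\frac1n\sum_{k=1}^n X^{(k)}_j$ be the empirical mean, and let $\tilde q_n(S)=q^{i}$ where $i$ is the smallest index such that $|q^{i}_j-\hat q_j|\le\sqrt{\tfrac{3\log n}{n}}+\varepsilon$ for all $j\in\{1,\dots,n-1\}$ (the output is undefined if no such index exists). Then for every $\mu\in\mathcal Q$, with $q=\mathrm{Mean}(\mu)$ and $X^{(1)},X^{(2)},\dots$ an i.i.d. sequence with law $\mu$ (with $\tilde q_n$ computed from the first $n$ points), almost surely there exists $n_0$ such that for all $n>n_0$, $\tilde q_n$ is defined and $\|\tilde q_n-q\|_\infty\le\varepsilon$.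
   Context: $\{0,1\}^{\mathbb N}$ carries the product $\sigma$-algebra. For a probability measure $\mu$ on $\{0,1\}^{\mathbb N}$, $\mathrm{Mean}(\mu)\in[0,1]^{\mathbb N}$ is the vector whose $j$-th coordinate is $\mathbb E[X_j]$ for $X\sim\mu$. For a collection $\mathcal Q$ of such measures, $\mathrm{Mean}(\mathcal Q)=\{\mathrm{Mean}(\mu):\mu\in\mathcal Q\}$. Logarithms are natural. *)

theory Defs
  imports "HOL-Probability.Probability"
begin

text \<open>The measurable space {0,1}^N with the product sigma-algebra.
  Coordinates are indexed from 0 here; paper coordinate j (j = 1,2,...) is coordinate j-1.\<close>
definition cube :: "(nat \<Rightarrow> bool) measure" where
  "cube = Pi\<^sub>M UNIV (\<lambda>_. count_space UNIV)"

definition Mean :: "(nat \<Rightarrow> bool) measure \<Rightarrow> nat \<Rightarrow> real" where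
  "Mean \<mu> j = (\<integral>x. (if x j then 1 else 0) \<partial>\<mu>)"

definition emp_mean :: "nat \<Rightarrow> (nat \<Rightarrow> nat \<Rightarrow> bool) \<Rightarrow> nat \<Rightarrow> real" where
  "emp_mean n S j = (1 / real n) * (\<Sum>k<n. (if S k j then 1 else 0))"

text \<open>Acceptance test for candidate index i (paper coordinates 1..n-1 = our 0..n-2).\<close>
definition accepts :: "(nat \<Rightarrow> nat \<Rightarrow> real) \<Rightarrow> real \<Rightarrow> nat \<Rightarrow> (nat \<Rightarrow> nat \<Rightarrow> bool) \<Rightarrow> nat \<Rightarrow> bool" where
  "accepts qs \<epsilon> n S i \<longleftrightarrow>
     (\<forall>j < n - 1. \<bar>qs i j - emp_mean n S j\<bar> \<le> sqrt (3 * ln (real n) / real n) + \<epsilon>)"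

text \<open>The estimator: the candidate with the smallest admissible index in I; None = undefined.\<close>
definition qtilde :: "(nat \<Rightarrow> nat \<Rightarrow> real) \<Rightarrow> nat set \<Rightarrow> real \<Rightarrow> nat \<Rightarrow> (nat \<Rightarrow> nat \<Rightarrow> bool)
    \<Rightarrow> (nat \<Rightarrow> real) option" where
  "qtilde qs I \<epsilon> n S =
     (if \<exists>i\<in>I. accepts qs \<epsilon> n S i
      then Some (qs (LEAST i. i \<in> I \<and> accepts qs \<epsilon> n S i)) else None)"

end

theory Submission imports Defs "HOL-Real_Asymp.Real_Asymp" begin

lemma coord_meas:
  assumes "sets \<mu> = sets cube"
  shows "(\<lambda>s::nat\<Rightarrow>bool. if s j then 1 else (0::real)) \<in> borel_measurable \<mu>"
proof -
  have "(\<lambda>s::nat\<Rightarrow>bool. s j) \<in> measurable cube (count_space UNIV)"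
    unfolding cube_def by (rule measurable_component_singleton) simp
  then have "(\<lambda>s::nat\<Rightarrow>bool. s j) \<in> measurable \<mu> (count_space UNIV)"
    using measurable_cong_sets[OF assms refl] by blast
  then show ?thesis by measurable
qed

lemma indep_coords:
  assumes "prob_space \<mu>"
  shows "prob_space.indep_vars (PiM UNIV (\<lambda>_::nat. \<mu>)) (\<lambda>_. \<mu>) (\<lambda>k x. x k) UNIV"
proof -
  interpret P: product_prob_space "\<lambda>_::nat. \<mu>" UNIV
    using assms by (simp add: product_prob_space_def product_sigma_finite_def prob_space_imp_sigma_finite product_prob_space_axioms_def)
  show ?thesis
    apply (subst P.indep_vars_iff_distr_eq_PiM)
    apply simp
    apply simp
    apply (subst distr_PiM_component)
    using assms apply (auto simp: restrict_UNIV[abs_def] distr_id)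
    done
qed

lemma hoeff:
  assumes pm: "prob_space \<mu>" and sm: "sets \<mu> = sets cube" and n: "n > 0" and t: "t \<ge> 0"
  shows "measure (PiM UNIV (\<lambda>_::nat. \<mu>))
     {S \<in> space (PiM UNIV (\<lambda>_::nat. \<mu>)). \<bar>emp_mean n S j - Mean \<mu> j\<bar> \<ge> t} \<le> 2 * exp (-2 * n * t\<^sup>2)"
proof -
  let ?P = "PiM UNIV (\<lambda>_::nat. \<mu>)"
  interpret P: product_prob_space "\<lambda>_::nat. \<mu>" UNIV
    using pm by (simp add: product_prob_space_def product_sigma_finite_def prob_space_imp_sigma_finite product_prob_space_axioms_def)
  define f where "f = (\<lambda>s::nat\<Rightarrow>bool. if s j then 1 else (0::real))"
  have fm[measurable]: "f \<in> borel_measurable \<mu>" unfolding f_def by (rule coord_meas[OF sm])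
  have comp[measurable]: "(\<lambda>x. x k) \<in> measurable ?P \<mu>" for k
    by (rule measurable_component_singleton) simp
  have ind: "P.indep_vars (\<lambda>_. borel) (\<lambda>k x. f (x k)) {..<n}"
    apply (rule P.indep_vars_compose2[where M'="\<lambda>_. \<mu>" and X="\<lambda>k x. x k"])
    apply (rule P.indep_vars_subset[OF indep_coords[OF pm]])
    by auto
  have dc: "distr ?P borel (\<lambda>x. f (x k)) = distr \<mu> borel f" for k
  proof -
    have "distr ?P borel (\<lambda>x. f (x k)) = distr (distr ?P \<mu> (\<lambda>x. x k)) borel f"
      by (subst distr_distr) (auto simp: comp_def)
    also have "distr ?P \<mu> (\<lambda>x. x k) = \<mu>"
      using distr_PiM_component[of UNIV "\<lambda>_. \<mu>" k] pm by simp
    finally show ?thesis .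
  qed
  interpret H: Hoeffding_ineq_iid ?P "{..<n}" "\<lambda>k x. f (x k)" "\<lambda>x. f (x 0)" 0 1 "P.expectation (\<lambda>x. f (x 0))"
    apply unfold_locales
    using ind dc apply auto
    unfolding f_def by auto
  have E: "P.expectation (\<lambda>x. f (x 0)) = Mean \<mu> j"
  proof -
    have "P.expectation (\<lambda>x. f (x 0)) = integral\<^sup>L (distr ?P \<mu> (\<lambda>x. x 0)) f"
      by (rule integral_distr[symmetric]) auto
    also have "distr ?P \<mu> (\<lambda>x. x 0) = \<mu>"
      using distr_PiM_component[of UNIV "\<lambda>_. \<mu>" 0] pm by simp
    finally show ?thesis unfolding Mean_def f_def .
  qed
  have "{S \<in> space ?P. \<bar>emp_mean n S j - Mean \<mu> j\<bar> \<ge> t} =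
        {x \<in> space ?P. \<bar>(\<Sum>k\<in>{..<n}. f (x k)) / real (card {..<n}) - P.expectation (\<lambda>x. f (x 0))\<bar> \<ge> t}"
    using E unfolding emp_mean_def f_def by (auto simp: divide_inverse mult.commute)
  also have "P.prob \<dots> \<le> 2 * exp (- 2 * real (card {..<n}) * t\<^sup>2 / (1 - 0)\<^sup>2)"
    by (rule H.Hoeffding_ineq_abs_ge') (use t n in auto)
  finally show ?thesis by simp
qed

lemma bc:
  assumes pm: "prob_space \<mu>" and sm: "sets \<mu> = sets cube"
  shows "AE S in PiM UNIV (\<lambda>_::nat. \<mu>). eventually (\<lambda>n. \<forall>j<n-1.
     \<bar>emp_mean n S j - Mean \<mu> j\<bar> < sqrt (3 * ln (real n) / real n)) sequentially"
proof -
  let ?P = "PiM UNIV (\<lambda>_::nat. \<mu>)"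
  define r where "r n = sqrt (3 * ln (real n) / real n)" for n :: nat
  interpret P: product_prob_space "\<lambda>_::nat. \<mu>" UNIV
    using pm by (simp add: product_prob_space_def product_sigma_finite_def prob_space_imp_sigma_finite product_prob_space_axioms_def)
  define B where "B n j = {S \<in> space ?P. r n \<le> \<bar>emp_mean n S j - Mean \<mu> j\<bar>}" for n j
  define A where "A n = (\<Union>j<n-1. B n j)" for n
  have pj[measurable]: "Measurable.pred \<mu> (\<lambda>s. s j)" for j
  proof -
    have "(\<lambda>s::nat\<Rightarrow>bool. s j) \<in> measurable cube (count_space UNIV)"
      unfolding cube_def by (rule measurable_component_singleton) simp
    then show ?thesis
      using measurable_cong_sets[OF sm refl] by blast
  qed
  have comp[measurable]: "(\<lambda>x. x k) \<in> measurable ?P \<mu>" for k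
    by (rule measurable_component_singleton) simp
  have Bm: "B n j \<in> sets ?P" for n j
    unfolding B_def emp_mean_def by measurable
  have Am: "A n \<in> sets ?P" for n
    unfolding A_def using Bm by auto
  have Abound: "measure ?P (A n) \<le> 2 / real n ^ 5" for n
  proof (cases "n \<ge> 2")
    case False
    then have "A n = {}" unfolding A_def by auto
    then show ?thesis by simp
  next
    case True
    have lnn: "ln (real n) \<ge> 0" using True by simp
    have e: "exp (-2 * real n * (r n)\<^sup>2) = 1 / real n ^ 6"
    proof -
      have "-2 * real n * (r n)\<^sup>2 = - (real 6 * ln (real n))"
        using True lnn unfolding r_def by (simp add: field_simps)
      then have "exp (-2 * real n * (r n)\<^sup>2) = inverse (exp (real 6 * ln (real n)))"
        by (simp add: exp_minus)
      also have "exp (real 6 * ln (real n)) = exp (ln (real n)) ^ 6"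
        by (rule exp_of_nat_mult)
      finally have "exp (-2 * real n * (r n)\<^sup>2) = inverse (exp (ln (real n)) ^ 6)" .
      also have "\<dots> = 1 / real n ^ 6" using True by (simp add: divide_inverse)
      finally show ?thesis .
    qed
    have "measure ?P (A n) \<le> (\<Sum>j<n-1. measure ?P (B n j))"
      unfolding A_def by (rule P.finite_measure_subadditive_finite) (auto simp: Bm)
    also have "\<dots> \<le> (\<Sum>j<n-1. 2 * exp (-2 * real n * (r n)\<^sup>2))"
      apply (rule sum_mono)
      unfolding B_def by (rule hoeff[OF pm sm]) (use True r_def in auto)
    also have "\<dots> = real (n - 1) * 2 / real n ^ 6" using e by simp
    also have "\<dots> \<le> real n * 2 / real n ^ 6"
      by (intro divide_right_mono mult_right_mono) auto
    also have "\<dots> = 2 / real n ^ 5" using True by (simp add: field_simps power_eq_if)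
    finally show ?thesis .
  qed
  have sg: "summable (\<lambda>n. 2 / real n ^ 5)"
    using summable_mult[OF inverse_power_summable[of 5, where 'a=real], of 2]
    by (simp add: divide_inverse)
  have sA: "summable (\<lambda>n. measure ?P (A n))"
    by (rule summable_comparison_test[OF _ sg]) (use Abound in auto)
  have "AE S in ?P. eventually (\<lambda>n. S \<in> space ?P - A n) sequentially"
    by (rule borel_cantelli_AE1) (use Am sA in \<open>auto simp: less_top[symmetric]\<close>)
  then show ?thesis
    by (rule AE_mp[OF _ AE_I2]) (auto elim!: eventually_mono simp: A_def B_def r_def not_le)
qed

lemma r_lim: "(\<lambda>n. sqrt (3 * ln (real n) / real n)) \<longlonglongrightarrow> 0"
  by real_asymp

lemma determ:
  fixes q :: "nat \<Rightarrow> real"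
  defines "r \<equiv> (\<lambda>n. sqrt (3 * ln (real n) / real n))"
  assumes ev: "eventually (\<lambda>n. \<forall>j<n-1. \<bar>emp_mean n S j - q j\<bar> < r n) sequentially"
    and i0: "i0 \<in> I" and i0q: "\<forall>j. \<bar>q j - qs i0 j\<bar> \<le> \<epsilon>"
  shows "eventually (\<lambda>n. \<exists>v. qtilde qs I \<epsilon> n S = Some v \<and> (\<forall>j. \<bar>v j - q j\<bar> \<le> \<epsilon>)) sequentially"
proof -
  have r0: "r \<longlonglongrightarrow> 0" unfolding r_def by (rule r_lim)
  define B where "B = {i \<in> I. i < i0 \<and> \<not> (\<forall>j. \<bar>qs i j - q j\<bar> \<le> \<epsilon>)}"
  have fB: "finite B" unfolding B_def by auto
  have rej: "eventually (\<lambda>n. \<not> accepts qs \<epsilon> n S i) sequentially" if "i \<in> B" for i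
  proof -
    from that obtain j where j: "\<bar>qs i j - q j\<bar> > \<epsilon>" unfolding B_def by (auto simp: not_le)
    define d where "d = \<bar>qs i j - q j\<bar> - \<epsilon>"
    have d: "d > 0" using j d_def by simp
    have e1: "eventually (\<lambda>n. r n < d / 2) sequentially"
      using order_tendstoD(2)[OF r0, of "d/2"] d by simp
    have e2: "eventually (\<lambda>n. j < n - 1) sequentially"
      by (rule eventually_sequentiallyI[of "j+2"]) auto
    show ?thesis
      using eventually_conj[OF ev eventually_conj[OF e1 e2]]
    proof (rule eventually_mono)
      fix n assume H: "(\<forall>j<n-1. \<bar>emp_mean n S j - q j\<bar> < r n) \<and> r n < d / 2 \<and> j < n - 1"
      then have "\<bar>emp_mean n S j - q j\<bar> < r n" by auto
      then have "\<bar>qs i j - emp_mean n S j\<bar> > r n + \<epsilon>" using H d_def by linarith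
      then show "\<not> accepts qs \<epsilon> n S i" using H unfolding accepts_def r_def by force
    qed
  qed
  have allrej: "eventually (\<lambda>n. \<forall>i\<in>B. \<not> accepts qs \<epsilon> n S i) sequentially"
    using fB rej by (simp add: eventually_ball_finite)
  show ?thesis
    using eventually_conj[OF ev allrej]
  proof (rule eventually_mono)
    fix n assume H: "(\<forall>j<n-1. \<bar>emp_mean n S j - q j\<bar> < r n) \<and> (\<forall>i\<in>B. \<not> accepts qs \<epsilon> n S i)"
    have acc0: "accepts qs \<epsilon> n S i0"
      unfolding accepts_def
    proof (intro allI impI)
      fix j assume "j < n - 1"
      then have "\<bar>emp_mean n S j - q j\<bar> < r n" using H by auto
      moreover have "\<bar>q j - qs i0 j\<bar> \<le> \<epsilon>" using i0q by auto
      ultimately show "\<bar>qs i0 j - emp_mean n S j\<bar> \<le> sqrt (3 * ln (real n) / real n) + \<epsilon>"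
        unfolding r_def by linarith
    qed
    define m where "m = (LEAST i. i \<in> I \<and> accepts qs \<epsilon> n S i)"
    have m: "m \<in> I \<and> accepts qs \<epsilon> n S m" unfolding m_def
      by (rule LeastI[of _ i0]) (use i0 acc0 in auto)
    have mle: "m \<le> i0" unfolding m_def
      by (rule Least_le) (use i0 acc0 in auto)
    have qt: "qtilde qs I \<epsilon> n S = Some (qs m)"
      unfolding qtilde_def m_def using i0 acc0 by auto
    have "\<forall>j. \<bar>qs m j - q j\<bar> \<le> \<epsilon>"
    proof (cases "m = i0")
      case True then show ?thesis using i0q by (simp add: abs_minus_commute)
    next
      case False
      then have "m \<notin> B" using H m by auto
      then show ?thesis using False mle m unfolding B_def by auto
    qed
    then show "\<exists>v. qtilde qs I \<epsilon> n S = Some v \<and> (\<forall>j. \<bar>v j - q j\<bar> \<le> \<epsilon>)"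
      using qt by auto
  qed
qed

theorem lemma1:
  fixes Q :: "(nat \<Rightarrow> bool) measure set"
    and \<epsilon> :: real
    and I :: "nat set"
    and qs :: "nat \<Rightarrow> nat \<Rightarrow> real"
  assumes Q: "\<And>\<mu>. \<mu> \<in> Q \<Longrightarrow> prob_space \<mu> \<and> sets \<mu> = sets cube"
    and eps: "\<epsilon> \<ge> 0"
    and range01: "\<And>i j. i \<in> I \<Longrightarrow> qs i j \<in> {0..1}"
    and cover: "\<And>\<mu>. \<mu> \<in> Q \<Longrightarrow> \<exists>i\<in>I. \<forall>j. \<bar>Mean \<mu> j - qs i j\<bar> \<le> \<epsilon>"
    and mu: "\<mu> \<in> Q"
  shows "AE S in Pi\<^sub>M UNIV (\<lambda>_::nat. \<mu>).
           \<exists>n0. \<forall>n > n0. \<exists>v. qtilde qs I \<epsilon> n S = Some v \<and> (\<forall>j. \<bar>v j - Mean \<mu> j\<bar> \<le> \<epsilon>)"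
proof -
  from cover[OF mu] obtain i0 where i0: "i0 \<in> I" "\<forall>j. \<bar>Mean \<mu> j - qs i0 j\<bar> \<le> \<epsilon>" by blast
  have key: "\<exists>n0. \<forall>n > n0. \<exists>v. qtilde qs I \<epsilon> n S = Some v \<and> (\<forall>j. \<bar>v j - Mean \<mu> j\<bar> \<le> \<epsilon>)"
    if H: "\<forall>\<^sub>F n in sequentially. \<forall>j<n - 1. \<bar>emp_mean n S j - Mean \<mu> j\<bar> < sqrt (3 * ln (real n) / real n)" for S
  proof -
    have "\<forall>\<^sub>F n in sequentially. \<exists>v. qtilde qs I \<epsilon> n S = Some v \<and> (\<forall>j. \<bar>v j - Mean \<mu> j\<bar> \<le> \<epsilon>)"
      by (rule determ) (use H i0 in auto)
    then obtain N where
      "\<forall>n\<ge>N. \<exists>v. qtilde qs I \<epsilon> n S = Some v \<and> (\<forall>j. \<bar>v j - Mean \<mu> j\<bar> \<le> \<epsilon>)"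
      unfolding eventually_sequentially by blast
    then show ?thesis by (intro exI[of _ N]) auto
  qed
  have "AE S in Pi\<^sub>M UNIV (\<lambda>_::nat. \<mu>). \<forall>\<^sub>F n in sequentially. \<forall>j<n - 1. \<bar>emp_mean n S j - Mean \<mu> j\<bar> < sqrt (3 * ln (real n) / real n)"
    using bc[OF conjunct1[OF Q[OF mu]] conjunct2[OF Q[OF mu]]] .
  then show ?thesis
    by (rule AE_mp) (rule AE_I2, use key in blast)
qed

end
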